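(* Let $|p|<1$, $|P|<1$, let $n\ge0$ be an integer, and let $a,b,c,d,q,r,s,t$ and $A,B,C,D,Q,R,S,T$ be nonzero complex numbers such that all expressions below are well defined. For a tuple $\pi=(a,b,c,d;q,r,s,t;p)$ define, for integers $k\ge0$, \begin{align*} \lambda_k(\pi)&=\frac{\theta\big(ad(rst/q)^k,\,br^k/(dq^k),\,cs^k/(dq^k),\,adt^k/(bcq^k);p\big)}{\theta\big(ad,\,b/d,\,c/d,\,ad/(bc);p\big)}\\ &\quad\times\frac{(a;rst/q^2,p)_k(b;r,p)_k(c;s,p)_k(ad^2/(bc);t,p)_k}{(dq;q,p)_k(adst/(bq);st/q,p)_k(adrt/(cq);rt/q,p)_k(bcrs/(dq);rs/q,p)_k}\,q^k,\\ \Phi_n(\pi)&=\frac{(arst/q^2;rst/q^2,p)_n(br;r,p)_n(cs;s,p)_n(ad^2t/(bc);t,p)_n}{(dq;q,p)_n(adst/(bq);st/q,p)_n(adrt/(cq);rt/q,p)_n(bcrs/(dq);rs/q,p)_n},\\ G_{n,k}(\pi)&=\frac{\theta(a,b,c,ad^2/(bc);p)}{d\,\theta(ad,b/d,c/d,ad/(bc);p)}\cdot\frac{(q^{-n}/d;q,p)_k\,(b(q/st)^n/(ad);st/q,p)_k}{((q^2/rst)^n/a;rst/q^2,p)_k\,(r^{-n}/b;r,p)_k}\\ &\qquad\times\frac{(c(q/rt)^n/(ad);rt/q,p)_k\,(d(q/rs)^n/(bc);rs/q,p)_k}{(s^{-n}/c;s,p)_k\,(bct^{-n}/(ad^2);t,p)_k}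 -\frac{\theta(d,ad/b,ad/c,bc/d;p)}{d\,\theta(ad,b/d,c/d,ad/(bc);p)}\cdot\frac{1}{\Phi_n(\pi)}. \end{align*} With $\pi=(a,b,c,d;q,r,s,t;p)$ and $\Pi=(A,B,C,D;Q,R,S,T;P)$, $$\sum_{k=0}^n\lambda_k(\pi)\,G_{n,k}(\Pi)=\frac{\Phi_n(\pi)}{\Phi_n(\Pi)}\sum_{k=0}^n\lambda_k(\Pi)\,G_{n,k}(\pi).$$
   Context: For $|p|<1$ and $x\neq 0$, $\theta(x;p)=(x;p)_\infty(p/x;p)_\infty$ where $(x;p)_\infty=\prod_{k\ge 0}(1-xp^k)$, and $\theta(x_1,\dots,x_m;p)=\prod_{i=1}^m\theta(x_i;p)$. For $a\ne0$ and integer $k\ge0$, $(a;q,p)_k=\prod_{j=0}^{k-1}\theta(aq^j;p)$ (empty product $=1$). In $\lambda_k(\Pi),\Phi_n(\Pi),G_{n,k}(\Pi)$ every lowercase letter is replaced by the corresponding uppercase letter (including the nome $p\mapsto P$ and base $q\mapsto Q$). Notation such as $(q/st)^n$ means $(q/(st))^n$. *)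

theory Defs
  imports "HOL-Analysis.Analysis"
begin

definition qpinf :: "complex \<Rightarrow> complex \<Rightarrow> complex" where
  "qpinf x p = (\<Prod>k. 1 - x  *  p ^ k)"

definition theta :: "complex \<Rightarrow> complex \<Rightarrow> complex" where
  "theta x p = qpinf x p  *  qpinf (p / x) p"

definition epoch :: "complex \<Rightarrow> complex \<Rightarrow> complex \<Rightarrow> nat \<Rightarrow> complex" where
  "epoch a q p k = (\<Prod>j<k. theta (a  *  q ^ j) p)"

definition lam :: "complex \<Rightarrow> complex \<Rightarrow> complex \<Rightarrow> complex \<Rightarrow> complex \<Rightarrow> complex
    \<Rightarrow> complex \<Rightarrow> complex \<Rightarrow> complex \<Rightarrow> nat \<Rightarrow> complex" where
  "lam a b c d q r s t p k =
     (theta (a * d * (r * s * t/q)^k) p  *  theta (b * r^k/(d * q^k)) p  *  theta (c * s^k/(d * q^k)) p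
         *  theta (a * d * t^k/(b * c * q^k)) p)
     / (theta (a * d) p  *  theta (b/d) p  *  theta (c/d) p  *  theta (a * d/(b * c)) p)
      *  ((epoch a (r * s * t/q^2) p k  *  epoch b r p k  *  epoch c s p k  *  epoch (a * d^2/(b * c)) t p k)
     / (epoch (d * q) q p k  *  epoch (a * d * s * t/(b * q)) (s * t/q) p k  *  epoch (a * d * r * t/(c * q)) (r * t/q) p k
         *  epoch (b * c * r * s/(d * q)) (r * s/q) p k))
      *  q ^ k"

definition Phi :: "complex \<Rightarrow> complex \<Rightarrow> complex \<Rightarrow> complex \<Rightarrow> complex \<Rightarrow> complex
    \<Rightarrow> complex \<Rightarrow> complex \<Rightarrow> complex \<Rightarrow> nat \<Rightarrow> complex" where
  "Phi a b c d q r s t p n =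
     (epoch (a * r * s * t/q^2) (r * s * t/q^2) p n  *  epoch (b * r) r p n  *  epoch (c * s) s p n
         *  epoch (a * d^2 * t/(b * c)) t p n)
     / (epoch (d * q) q p n  *  epoch (a * d * s * t/(b * q)) (s * t/q) p n  *  epoch (a * d * r * t/(c * q)) (r * t/q) p n
         *  epoch (b * c * r * s/(d * q)) (r * s/q) p n)"

definition G :: "complex \<Rightarrow> complex \<Rightarrow> complex \<Rightarrow> complex \<Rightarrow> complex \<Rightarrow> complex
    \<Rightarrow> complex \<Rightarrow> complex \<Rightarrow> complex \<Rightarrow> nat \<Rightarrow> nat \<Rightarrow> complex" where
  "G a b c d q r s t p n k =
     (theta a p  *  theta b p  *  theta c p  *  theta (a * d^2/(b * c)) p)
       / (d  *  (theta (a * d) p  *  theta (b/d) p  *  theta (c/d) p  *  theta (a * d/(b * c)) p))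
      *  ((epoch (1/(q^n * d)) q p k  *  epoch (b * (q/(s * t))^n/(a * d)) (s * t/q) p k)
        / (epoch ((q^2/(r * s * t))^n/a) (r * s * t/q^2) p k  *  epoch (1/(r^n * b)) r p k))
      *  ((epoch (c * (q/(r * t))^n/(a * d)) (r * t/q) p k  *  epoch (d * (q/(r * s))^n/(b * c)) (r * s/q) p k)
        / (epoch (1/(s^n * c)) s p k  *  epoch (b * c/(t^n * a * d^2)) t p k))
     - (theta d p  *  theta (a * d/b) p  *  theta (a * d/c) p  *  theta (b * c/d) p)
       / (d  *  (theta (a * d) p  *  theta (b/d) p  *  theta (c/d) p  *  theta (a * d/(b * c)) p))
      *  (1 / Phi a b c d q r s t p n)"

text \<open>"All expressions are well defined": parameters nonzero, |p|<1, and every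
  denominator occurring in lam_k (k \<le> n), Phi_n, 1/Phi_n and G_{n,k} (k \<le> n) is nonzero.
  Since (x;q,p)_k divides (x;q,p)_n for k \<le> n, it suffices to require this at k = n.\<close>
definition well_defined :: "complex \<Rightarrow> complex \<Rightarrow> complex \<Rightarrow> complex \<Rightarrow> complex \<Rightarrow> complex
    \<Rightarrow> complex \<Rightarrow> complex \<Rightarrow> complex \<Rightarrow> nat \<Rightarrow> bool" where
  "well_defined a b c d q r s t p n \<longleftrightarrow>
     norm p < 1 \<and>
     a \<noteq> 0 \<and> b \<noteq> 0 \<and> c \<noteq> 0 \<and> d \<noteq> 0 \<and> q \<noteq> 0 \<and> r \<noteq> 0 \<and> s \<noteq> 0 \<and> t \<noteq> 0 \<and>
     theta (a * d) p  *  theta (b/d) p  *  theta (c/d) p  *  theta (a * d/(b * c)) p \<noteq> 0 \<and>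
     epoch (d * q) q p n  *  epoch (a * d * s * t/(b * q)) (s * t/q) p n  *  epoch (a * d * r * t/(c * q)) (r * t/q) p n
         *  epoch (b * c * r * s/(d * q)) (r * s/q) p n \<noteq> 0 \<and>
     epoch (a * r * s * t/q^2) (r * s * t/q^2) p n  *  epoch (b * r) r p n  *  epoch (c * s) s p n
         *  epoch (a * d^2 * t/(b * c)) t p n \<noteq> 0 \<and>
     epoch ((q^2/(r * s * t))^n/a) (r * s * t/q^2) p n  *  epoch (1/(r^n * b)) r p n \<noteq> 0 \<and>
     epoch (1/(s^n * c)) s p n  *  epoch (b * c/(t^n * a * d^2)) t p n \<noteq> 0"

end

theory Submission
  imports Defs "HOL-Complex_Analysis.Complex_Analysis"
begin

lemma qpinf_absconv: fixes x p :: complex assumes "norm p < 1" shows "abs_convergent_prod (\<lambda>k. 1 - x * p^k)"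
proof (rule summable_imp_abs_convergent_prod)
  show "summable (\<lambda>k. norm (1 - x*p^k - 1))"
    using assms by (simp add: norm_mult norm_power summable_mult summable_geometric)
qed

lemma qpinf_conv: fixes x p :: complex assumes "norm p < 1" shows "convergent_prod (\<lambda>k. 1 - x * p^k)"
  by (rule abs_convergent_prod_imp_convergent_prod[OF qpinf_absconv[OF assms]])

lemma qpinf_shift: assumes "norm p < 1" shows "qpinf x p = (1 - x) * qpinf (p*x) p"
proof (cases "x = 1")
  case True
  have "(\<lambda>k. 1 - x * p^k) has_prod qpinf x p"
    using qpinf_conv[OF assms] unfolding qpinf_def by (simp add: convergent_prod_has_prod)
  then have "qpinf x p = 0" by (rule has_prod_zeroI[where n=0]) (simp add: True)
  then show ?thesis using True by simp
next
  case False
  have "(\<Prod>n. (\<lambda>k. 1 - x * p^k) (Suc n)) = (\<Prod>k. 1 - x * p^k) / (1 - x * p^0)"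
    by (rule prodinf_split_head[OF qpinf_conv[OF assms]]) (use False in auto)
  then show ?thesis using False unfolding qpinf_def by (simp add: field_simps)
qed

lemma qpinf_zero: assumes "norm p < 1" "qpinf x p = 0" shows "\<exists>k. x * p^k = 1"
proof (rule ccontr)
  assume "\<not> ?thesis"
  then have "prodinf (\<lambda>k. 1 - x * p^k) \<noteq> 0"
    by (intro prodinf_nonzero qpinf_conv assms) auto
  then show False using assms unfolding qpinf_def by simp
qed

lemma theta_inv: fixes x p :: complex assumes "norm p < 1" "x \<noteq> 0" shows "theta (1/x) p = - theta x p / x"
proof -
  have e1: "theta (1/x) p = qpinf (1/x) p * qpinf (p*x) p" unfolding theta_def by simp
  have e2: "qpinf (1/x) p = (1 - 1/x) * qpinf (p/x) p" using qpinf_shift[OF assms(1), of "1/x"] by simp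
  have e3: "theta x p = (1 - x) * qpinf (p*x) p * qpinf (p/x) p" unfolding theta_def
    using qpinf_shift[OF assms(1), of x] by simp
  show ?thesis unfolding e1 e2 e3 using assms(2) by (simp add: field_simps)
qed

lemma theta_shift: assumes "norm p < 1" "x \<noteq> 0" "p \<noteq> 0" shows "theta (p*x) p = - theta x p / x"
proof -
  have "theta (p*x) p = theta (1/x) p" unfolding theta_def using assms by (simp add: mult.commute)
  then show ?thesis using theta_inv[OF assms(1,2)] by simp
qed

lemma theta_one: assumes "norm p < 1" shows "theta 1 p = 0"
  unfolding theta_def using qpinf_shift[OF assms, of 1] by simp

lemma theta_zero: assumes "norm p < 1" "x \<noteq> 0" "theta x p = 0" shows "\<exists>k::int. x = p powi k"
proof -
  from assms(3) have "qpinf x p = 0 \<or> qpinf (p/x) p = 0" unfolding theta_def by simp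
  then show ?thesis
  proof
    assume "qpinf x p = 0"
    then obtain k where k: "x * p^k = 1" using qpinf_zero assms by blast
    then have "p \<noteq> 0 \<or> k = 0" by (cases k) auto
    then have "x = p powi (- int k)" using k by (auto simp: power_int_minus field_simps)
    then show ?thesis by blast
  next
    assume "qpinf (p/x) p = 0"
    then obtain k where k: "p/x * p^k = 1" using qpinf_zero assms by blast
    then have "x = p ^ (Suc k)" using assms(2) by (simp add: field_simps)
    then have "x = p powi (int (Suc k))" by (simp only: power_int_of_nat)
    then show ?thesis by blast
  qed
qed

lemma qpinf_holo: fixes p :: complex assumes "norm p < 1" shows "(\<lambda>x. qpinf x p) holomorphic_on UNIV"
proof (rule holomorphic_uniform_sequence[where f="\<lambda>N x. \<Prod>n<N. 1 - x * p^n"])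
  fix N show "(\<lambda>x. \<Prod>n<N. 1 - x * p^n) holomorphic_on UNIV" by (intro holomorphic_intros)
next
  fix z :: complex assume "z \<in> UNIV"
  define R where "R = norm z + 1"
  have uc: "uniformly_convergent_on (cball 0 R) (\<lambda>N x. \<Prod>n<N. 1 - x * p^n)"
  proof (rule uniformly_convergent_on_prod')
    show "\<And>n. continuous_on (cball 0 R) (\<lambda>x. 1 - x*p^n)" by (intro continuous_intros)
    show "compact (cball (0::complex) R)" by simp
    show "uniformly_convergent_on (cball 0 R) (\<lambda>N x. \<Sum>n<N. norm (1 - x * p^n - 1))"
    proof (rule Weierstrass_m_test')
      fix n and x :: complex assume "x \<in> cball 0 R"
      then show "norm (norm (1 - x * p^n - 1)) \<le> R * norm p ^ n"
      proof -
        have "norm (1 - x * p^n - 1) = norm x * norm p ^ n" by (simp add: norm_mult norm_power)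
        moreover have "norm x \<le> R" using \<open>x \<in> cball 0 R\<close> by simp
        ultimately show ?thesis by (simp add: mult_right_mono)
      qed
    next
      show "summable (\<lambda>n. R * norm p ^ n)" using assms by (simp add: summable_mult summable_geometric)
    qed
  qed
  then obtain g where g: "uniform_limit (cball 0 R) (\<lambda>N x. \<Prod>n<N. 1 - x * p^n) g sequentially"
    by (auto simp: uniformly_convergent_on_def)
  also have "?this \<longleftrightarrow> uniform_limit (cball 0 R) (\<lambda>N x. \<Prod>n<N. 1 - x * p^n) (\<lambda>x. qpinf x p) sequentially"
  proof (rule uniform_limit_cong')
    fix x :: complex assume x: "x \<in> cball 0 R"
    have "(\<lambda>N. \<Prod>n<N. 1 - x*p^n) \<longlonglongrightarrow> g x" by (rule tendsto_uniform_limitI[OF g x])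
    then have "(\<lambda>N. \<Prod>n<Suc N. 1 - x*p^n) \<longlonglongrightarrow> g x" by (rule LIMSEQ_Suc)
    moreover have "(\<lambda>N. \<Prod>n<Suc N. 1 - x*p^n) \<longlonglongrightarrow> qpinf x p"
      using convergent_prod_LIMSEQ[OF qpinf_conv[OF assms, of x]] unfolding lessThan_Suc_atMost qpinf_def .
    ultimately show "g x = qpinf x p" using LIMSEQ_unique by blast
  qed (rule refl)
  finally have "uniform_limit (cball z 1) (\<lambda>N x. \<Prod>n<N. 1 - x * p^n) (\<lambda>x. qpinf x p) sequentially"
    by (rule uniform_limit_on_subset) (auto simp: R_def cball_subset_cball_iff)
  then show "\<exists>d>0. cball z d \<subseteq> UNIV \<and> uniform_limit (cball z d) (\<lambda>N x. \<Prod>n<N. 1 - x * p^n) (\<lambda>x. qpinf x p) sequentially"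
    by (intro exI[of _ 1]) auto
qed auto

lemma qpinf_holo' [holomorphic_intros]: fixes p :: complex assumes "norm p < 1" "f holomorphic_on S"
  shows "(\<lambda>x. qpinf (f x) p) holomorphic_on S"
  using holomorphic_on_compose[OF assms(2) holomorphic_on_subset[OF qpinf_holo[OF assms(1)]]]
  by (simp add: o_def)

lemma theta_holo [holomorphic_intros]: fixes p :: complex assumes "norm p < 1" "f holomorphic_on S"
  "\<And>x. x \<in> S \<Longrightarrow> f x \<noteq> 0"
  shows "(\<lambda>x. theta (f x) p) holomorphic_on S"
  unfolding theta_def using assms by (intro holomorphic_intros) auto

lemma theta_nz: fixes p y :: complex assumes "norm p < 1" "y \<noteq> 0" "\<And>k. y \<noteq> p powi k"
  shows "theta y p \<noteq> 0"
  using theta_zero[OF assms(1,2)] assms(3) by blast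

lemma theta_fact: fixes p x :: complex assumes "norm p < 1"
  shows "theta x p = (1 - x) * (qpinf (p*x) p * qpinf (p/x) p)"
  unfolding theta_def using qpinf_shift[OF assms, of x] by simp

lemma qpinf_p_nz: fixes p :: complex assumes "norm p < 1" shows "qpinf p p \<noteq> 0"
  unfolding qpinf_def
proof (rule prodinf_nonzero[OF qpinf_conv[OF assms]])
  fix k
  have "norm p ^ k \<le> 1" using assms by (simp add: power_le_one)
  then have "norm p * norm p ^ k \<le> norm p" by (simp add: mult_left_le)
  then have "norm (p * p^k) < 1" using assms by (simp add: norm_mult norm_power)
  then show "1 - p * p^k \<noteq> 0" by auto
qed

lemma lim_lemma:
  fixes f D K :: "complex \<Rightarrow> complex"
  assumes "(f has_field_derivative f') (at z0)" "f z0 = 0" "isCont K z0" "K z0 \<noteq> 0" "u \<noteq> 0" "u * z0 = 1"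
    "\<And>x. D x = (1 - u*x) * K x"
  shows "((\<lambda>x. f x / D x) \<longlongrightarrow> f' / (- u * K z0)) (at z0)"
proof -
  have 1: "((\<lambda>y. (f y - f z0) / (y - z0)) \<longlongrightarrow> f') (at z0)"
    using assms(1) by (simp add: has_field_derivative_iff)
  have 2: "((\<lambda>y. - u * K y) \<longlongrightarrow> - u * K z0) (at z0)"
    using assms(3) by (intro tendsto_intros) (simp add: isCont_def)
  have 3: "((\<lambda>y. ((f y - f z0) / (y - z0)) / (- u * K y)) \<longlongrightarrow> f' / (- u * K z0)) (at z0)"
    using assms(4,5) by (intro tendsto_divide 1 2) auto
  have ev: "eventually (\<lambda>y. ((f y - f z0) / (y - z0)) / (- u * K y) = f y / D y) (at z0)"
    unfolding eventually_at_filter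
  proof (intro always_eventually allI impI)
    fix y assume "y \<noteq> z0"
    have "1 - u*y = - u * (y - z0)" using assms(6) by (simp add: algebra_simps)
    then have "D y = (y - z0) * (- u * K y)" using assms(7)[of y] by simp
    then show "((f y - f z0) / (y - z0)) / (- u * K y) = f y / D y"
      using assms(2) \<open>y \<noteq> z0\<close> by simp
  qed
  show ?thesis using Lim_transform_eventually[OF 3 ev] .
qed

definition ff :: "complex \<Rightarrow> complex \<Rightarrow> complex \<Rightarrow> complex \<Rightarrow> complex \<Rightarrow> complex" where
  "ff p b c d x = theta x p * theta b p * theta c p * theta (x*(d^2/(b*c))) p
     - theta d p * theta (x*(d/b)) p * theta (x*(d/c)) p * theta (b*c/d) p
     - d * theta (x*d) p * theta (b/d) p * theta (c/d) p * theta (x*(d/(b*c))) p"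

definition DD :: "complex \<Rightarrow> complex \<Rightarrow> complex \<Rightarrow> complex \<Rightarrow> complex \<Rightarrow> complex" where
  "DD p b c d x = theta x p * theta (x*(d^2/(b*c))) p"

lemma annulus_k: fixes p y :: complex assumes "0 < norm p" "norm p < 1" "y \<noteq> 0"
  shows "\<exists>k::int. norm p \<le> norm (p powi k * y) \<and> norm (p powi k * y) \<le> 1"
proof -
  define L where "L = ln (norm p)"
  define r where "r = norm y"
  have L: "L < 0" using assms unfolding L_def by simp
  have r: "r > 0" using assms unfolding r_def by simp
  define t where "t = - ln r / L"
  define k where "k = \<lceil>t\<rceil>"
  have k1: "t \<le> of_int k" "of_int k \<le> t + 1" unfolding k_def by simp_all
  have tL: "t * L = - ln r" unfolding t_def using L by simp
  have a1: "of_int k * L \<le> - ln r" using mult_right_mono_neg[OF k1(1), of L] L tL by simp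
  have a2: "(t + 1) * L \<le> of_int k * L" using mult_right_mono_neg[OF k1(2), of L] L by simp
  have a2': "L - ln r \<le> of_int k * L" using a2 tL by (simp add: algebra_simps)
  have nrm: "norm (p powi k * y) = exp (of_int k * L + ln r)"
  proof -
    have "norm (p powi k * y) = norm p powi k * r" by (simp add: norm_mult norm_power_int r_def)
    also have "norm p powi k = norm p powr (of_int k)" using assms by (simp add: powr_real_of_int')
    also have "\<dots> = exp (of_int k * L)" using assms by (simp add: powr_def L_def)
    also have "r = exp (ln r)" using r by simp
    finally show ?thesis by (simp add: exp_add)
  qed
  have "norm p = exp L" using assms unfolding L_def by simp
  moreover have "exp L \<le> exp (of_int k * L + ln r)" using a2' by simp
  moreover have "exp (of_int k * L + ln r) \<le> 1" using a1 by simp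
  ultimately show ?thesis using nrm by metis
qed

lemma ex_lim:
  fixes F K D :: "complex \<Rightarrow> complex"
  assumes "F holomorphic_on -{0}" "z0 \<noteq> 0" "F z0 = 0" "K holomorphic_on -{0}" "K z0 \<noteq> 0" "u \<noteq> 0"
    "u * z0 = 1" "\<And>x. D x = (1 - u*x) * K x"
  shows "\<exists>L. ((\<lambda>x. F x / D x) \<longlongrightarrow> L) (at z0)"
proof -
  have "F field_differentiable at z0"
    using holomorphic_on_imp_differentiable_at[OF assms(1)] assms(2) by auto
  then obtain f' where f': "(F has_field_derivative f') (at z0)" by (auto simp: field_differentiable_def)
  have "continuous_on (-{0}) K" using assms(4) by (rule holomorphic_on_imp_continuous_on)
  moreover have "open (-{0::complex})" by (simp add: open_Compl)
  ultimately have "isCont K z0" using assms(2) continuous_on_eq_continuous_at by blast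
  from lim_lemma[OF f' assms(3) this assms(5,6,7,8)] show ?thesis by blast
qed

context
  fixes p b c d :: complex
  assumes p1: "norm p < 1" and p0: "p \<noteq> 0" and b0: "b \<noteq> 0" and c0: "c \<noteq> 0" and d0: "d \<noteq> 0"
    and G1: "\<And>k. d^2/(b*c) \<noteq> p powi k" and G2: "\<And>k. b/d \<noteq> p powi k" and G3: "\<And>k. d/c \<noteq> p powi k"
begin

lemma m0: "d^2/(b*c) \<noteq> 0" using b0 c0 d0 by simp

lemma f_hol: "ff p b c d holomorphic_on -{0}"
  unfolding ff_def using b0 c0 d0 p1 by (intro holomorphic_intros) auto

lemma D_hol: "DD p b c d holomorphic_on -{0}"
  unfolding DD_def using b0 c0 d0 p1 by (intro holomorphic_intros) auto

lemma th_sh: "y \<noteq> 0 \<Longrightarrow> theta (p*y) p = - theta y p / y"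
  using theta_shift[OF p1 _ p0] by blast

lemma f_shift: assumes "x \<noteq> 0" shows "ff p b c d (p*x) = ff p b c d x / (x*x*(d^2/(b*c)))"
proof -
  have e: "theta (p*x*z) p = - theta (x*z) p / (x*z)" if "z \<noteq> 0" for z
    using th_sh[of "x*z"] that assms by (simp add: mult.assoc)
  have e0: "theta (p*x) p = - theta x p / x" using th_sh assms by blast
  note e1 = e[of "d^2/(b*c)"] e[of "d/b"] e[of "d/c"] e[of d] e[of "d/(b*c)"]
  have "ff p b c d (p*x) = - theta x p / x * theta b p * theta c p * (- theta (x*(d^2/(b*c))) p / (x*(d^2/(b*c))))
     - theta d p * (- theta (x*(d/b)) p / (x*(d/b))) * (- theta (x*(d/c)) p / (x*(d/c))) * theta (b*c/d) p
     - d * (- theta (x*d) p / (x*d)) * theta (b/d) p * theta (c/d) p * (- theta (x*(d/(b*c))) p / (x*(d/(b*c))))"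
    unfolding ff_def e0 using e1 b0 c0 d0 by simp
  also have "\<dots> = ff p b c d x / (x*x*(d^2/(b*c)))"
    unfolding ff_def using b0 c0 d0 assms by (simp add: field_simps power2_eq_square)
  finally show ?thesis .
qed

lemma D_shift: assumes "x \<noteq> 0" shows "DD p b c d (p*x) = DD p b c d x / (x*x*(d^2/(b*c)))"
proof -
  have e: "theta (p*x*z) p = - theta (x*z) p / (x*z)" if "z \<noteq> 0" for z
    using th_sh[of "x*z"] that assms by (simp add: mult.assoc)
  have e0: "theta (p*x) p = - theta x p / x" using th_sh assms by blast
  have "DD p b c d (p*x) = - theta x p / x * (- theta (x*(d^2/(b*c))) p / (x*(d^2/(b*c))))"
    unfolding DD_def e0 using e[of "d^2/(b*c)"] b0 c0 d0 by simp
  also have "\<dots> = DD p b c d x / (x*x*(d^2/(b*c)))"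
    unfolding DD_def using b0 c0 d0 assms by (simp add: field_simps power2_eq_square)
  finally show ?thesis .
qed

lemma thm_nz: "theta (d^2/(b*c)) p \<noteq> 0"
  by (rule theta_nz[OF p1 m0 G1])

lemma thm'_nz: "theta (b*c/d^2) p \<noteq> 0"
proof (rule theta_nz[OF p1])
  show "b*c/d^2 \<noteq> 0" using b0 c0 d0 by simp
  fix k :: int show "b*c/d^2 \<noteq> p powi k"
  proof
    assume "b*c/d^2 = p powi k"
    moreover have "d^2/(b*c) = inverse (b*c/d^2)" by simp
    ultimately have "d^2/(b*c) = p powi (-k)" by (simp add: power_int_minus)
    then show False using G1 by blast
  qed
qed

lemma f1: "ff p b c d 1 = 0"
proof -
  have i1: "theta (b/d) p = - theta (d/b) p / (d/b)" using theta_inv[OF p1, of "d/b"] b0 d0 by simp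
  have i2: "theta (c/d) p = - theta (d/c) p / (d/c)" using theta_inv[OF p1, of "d/c"] c0 d0 by simp
  have i3: "theta (d/(b*c)) p = - theta (b*c/d) p / (b*c/d)" using theta_inv[OF p1, of "b*c/d"] b0 c0 d0 by simp
  show ?thesis unfolding ff_def mult_1_left i1 i2 i3 theta_one[OF p1] using b0 c0 d0
    by (simp add: field_simps)
qed

lemma fm: "ff p b c d (b*c/d^2) = 0"
proof -
  have a: "(b*c/d^2)*(d^2/(b*c)) = 1" "(b*c/d^2)*(d/b) = c/d" "(b*c/d^2)*(d/c) = b/d"
    "(b*c/d^2)*d = b*c/d" "(b*c/d^2)*(d/(b*c)) = 1/d"
    using b0 c0 d0 by (simp_all add: field_simps power2_eq_square)
  have i: "theta (1/d) p = - theta d p / d" using theta_inv[OF p1 d0] .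
  show ?thesis unfolding ff_def a i theta_one[OF p1] using b0 c0 d0
    by (simp add: field_simps)
qed

lemma fb: "ff p b c d (b/d) = 0"
proof -
  have a: "(b/d)*(d^2/(b*c)) = d/c" "(b/d)*(d/b) = 1" "(b/d)*(d/c) = b/c"
    "(b/d)*d = b" "(b/d)*(d/(b*c)) = 1/c"
    using b0 c0 d0 by (simp_all add: field_simps power2_eq_square)
  have i: "theta (1/c) p = - theta c p / c" using theta_inv[OF p1 c0] .
  have i2: "theta (c/d) p = - theta (d/c) p / (d/c)" using theta_inv[OF p1, of "d/c"] c0 d0 by simp
  show ?thesis unfolding ff_def a i i2 theta_one[OF p1] using b0 c0 d0
    by (simp add: field_simps)
qed

lemma Db: "DD p b c d (b/d) \<noteq> 0"
proof -
  have a: "(b/d)*(d^2/(b*c)) = d/c" using b0 c0 d0 by (simp add: field_simps power2_eq_square)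
  show ?thesis unfolding DD_def a using theta_nz[OF p1 _ G2] theta_nz[OF p1 _ G3] b0 c0 d0 by simp
qed

lemma lim1: "\<exists>L. ((\<lambda>x. ff p b c d x / DD p b c d x) \<longlongrightarrow> L) (at 1)"
proof (rule ex_lim[OF f_hol _ f1, where u=1 and K="\<lambda>x. (qpinf (p*x) p * qpinf (p/x) p) * theta (x*(d^2/(b*c))) p"])
  show "(\<lambda>x. (qpinf (p*x) p * qpinf (p/x) p) * theta (x*(d^2/(b*c))) p) holomorphic_on -{0}"
    using b0 c0 d0 p1 by (intro holomorphic_intros) auto
  show "(qpinf (p*1) p * qpinf (p/1) p) * theta (1*(d^2/(b*c))) p \<noteq> 0"
    using qpinf_p_nz[OF p1] thm_nz by simp
  fix x show "DD p b c d x = (1 - 1*x) * ((qpinf (p*x) p * qpinf (p/x) p) * theta (x*(d^2/(b*c))) p)"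
    unfolding DD_def theta_fact[OF p1, of x] by simp
qed auto

lemma lim2: "\<exists>L. ((\<lambda>x. ff p b c d x / DD p b c d x) \<longlongrightarrow> L) (at (b*c/d^2))"
proof (rule ex_lim[OF f_hol _ fm, where u="d^2/(b*c)" and K="\<lambda>x. theta x p * (qpinf (p*(x*(d^2/(b*c)))) p * qpinf (p/(x*(d^2/(b*c)))) p)"])
  show "(\<lambda>x. theta x p * (qpinf (p*(x*(d^2/(b*c)))) p * qpinf (p/(x*(d^2/(b*c)))) p)) holomorphic_on -{0}"
    using b0 c0 d0 p1 by (intro holomorphic_intros) auto
  have a: "(b*c/d^2)*(d^2/(b*c)) = 1" using b0 c0 d0 by (simp add: field_simps)
  show "theta (b*c/d^2) p * (qpinf (p*((b*c/d^2)*(d^2/(b*c)))) p * qpinf (p/((b*c/d^2)*(d^2/(b*c)))) p) \<noteq> 0"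
    unfolding a using qpinf_p_nz[OF p1] thm'_nz by simp
  fix x show "DD p b c d x = (1 - d^2/(b*c)*x) * (theta x p * (qpinf (p*(x*(d^2/(b*c)))) p * qpinf (p/(x*(d^2/(b*c)))) p))"
    unfolding DD_def theta_fact[OF p1, of "x*(d^2/(b*c))"] by (simp add: algebra_simps)
qed (use b0 c0 d0 in \<open>auto simp: field_simps\<close>)

end

context
  fixes p b c d :: complex
  assumes p1: "norm p < 1" and p0: "p \<noteq> 0" and b0: "b \<noteq> 0" and c0: "c \<noteq> 0" and d0: "d \<noteq> 0"
    and G1: "\<And>k. d^2/(b*c) \<noteq> p powi k" and G2: "\<And>k. b/d \<noteq> p powi k" and G3: "\<And>k. d/c \<noteq> p powi k"
begin

lemma generic_zero: assumes x0: "x \<noteq> 0" and Dx: "DD p b c d x \<noteq> 0" shows "ff p b c d x = 0"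
proof -
  note ctx = p1 p0 b0 c0 d0 G1 G2 G3
  define f where "f = ff p b c d"
  define D where "D = DD p b c d"
  define m where "m = d^2/(b*c)"
  have m0: "m \<noteq> 0" unfolding m_def using b0 c0 d0 by simp
  obtain L1 where L1: "((\<lambda>x. f x / D x) \<longlongrightarrow> L1) (at 1)" using lim1[OF ctx] unfolding f_def D_def by blast
  obtain L2 where L2: "((\<lambda>x. f x / D x) \<longlongrightarrow> L2) (at (b*c/d^2))" using lim2[OF ctx] unfolding f_def D_def by blast
  define hh where "hh x = (if D x \<noteq> 0 then f x / D x else if theta x p = 0 then L1 else L2)" for x
  have fh: "f holomorphic_on -{0}" unfolding f_def by (rule f_hol[OF ctx])
  have Dh: "D holomorphic_on -{0}" unfolding D_def by (rule D_hol[OF ctx])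
  have per1: "hh (p*x) = hh x" if "x \<noteq> 0" for x
  proof -
    have fs: "f (p*x) = f x / (x*x*m)" unfolding f_def m_def by (rule f_shift[OF ctx that])
    have Ds: "D (p*x) = D x / (x*x*m)" unfolding D_def m_def by (rule D_shift[OF ctx that])
    have ts: "theta (p*x) p = - theta x p / x" by (rule theta_shift[OF p1 that p0])
    have "x*x*m \<noteq> 0" using that m0 by simp
    then show ?thesis unfolding hh_def fs Ds ts using that by auto
  qed
  have pern: "hh (p^n * x) = hh x" if "x \<noteq> 0" for x n
  proof (induction n)
    case (Suc n)
    have "p^n * x \<noteq> 0" using that p0 by simp
    then show ?case using per1[of "p^n*x"] Suc by (simp add: mult.assoc)
  qed simp
  have peri: "hh (p powi k * x) = hh x" if "x \<noteq> 0" for x k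
  proof (cases "k \<ge> 0")
    case True
    then obtain n where "k = int n" by (metis nonneg_int_cases)
    then show ?thesis using pern[OF that, of n] by (simp add: power_int_of_nat)
  next
    case False
    then obtain n where n: "k = - int n" by (metis nonpos_int_cases linorder_not_le less_imp_le)
    have y0: "p powi k * x \<noteq> 0" using that p0 by simp
    have e: "p^n * (p powi k * x) = x" unfolding n using p0 by (simp add: power_int_minus field_simps)
    have "hh (p^n * (p powi k * x)) = hh (p powi k * x)" by (rule pern[OF y0])
    then show ?thesis unfolding e by (rule sym)
  qed
  have opn: "open (-{0::complex})" by (simp add: open_Compl)
  have conn: "connected (-{0::complex})" by (rule connected_punctured_universe) simp
  have bd0: "b/d \<in> -{0}" using b0 d0 by simp
  have Dbd: "D (b/d) \<noteq> 0" unfolding D_def by (rule Db[OF ctx])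
  have loc: "\<exists>r>0. ball z0 r \<subseteq> -{0} \<and> hh holomorphic_on ball z0 r"
    if z0: "z0 \<noteq> 0" "D z0 = 0" "hh z0 = V" "((\<lambda>x. f x / D x) \<longlongrightarrow> V) (at z0)" for z0 V
  proof -
    obtain r where r: "0 < r" "ball z0 r \<subseteq> -{0}" "\<And>z. z \<in> ball z0 r - {z0} \<Longrightarrow> D z \<noteq> 0"
      using isolated_zeros[OF Dh opn conn _ z0(2) bd0 Dbd] z0(1) by auto
    have eq: "hh z = f z / D z" if "z \<in> ball z0 r - {z0}" for z using r(3)[OF that] unfolding hh_def by simp
    have ev: "eventually (\<lambda>x. f x / D x = hh x) (at z0)"
      unfolding eventually_at
    proof (intro exI[of _ r] conjI ballI impI)
      show "r > 0" by (rule r(1))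
      fix x assume "x \<in> UNIV" "x \<noteq> z0 \<and> dist x z0 < r"
      then have "x \<in> ball z0 r - {z0}" using \<open>x \<noteq> z0 \<and> dist x z0 < r\<close> by (simp add: dist_commute)
      then show "f x / D x = hh x" using eq by simp
    qed
    have lim: "(hh \<longlongrightarrow> V) (at z0)" using Lim_transform_eventually[OF z0(4) ev] .
    have atw: "at z0 within ball z0 r = at z0" by (rule at_within_open) (use r(1) in simp_all)
    have sub: "ball z0 r - {z0} \<subseteq> -{0}" using r(2) by auto
    have hd: "(\<lambda>z. f z / D z) holomorphic_on ball z0 r - {z0}"
      by (rule holomorphic_on_divide[OF holomorphic_on_subset[OF fh sub] holomorphic_on_subset[OF Dh sub]])
         (rule r(3))
    have "hh holomorphic_on ball z0 r"
    proof (rule no_isolated_singularity'[where K="{z0}"])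
      show "(hh \<longlongrightarrow> hh z) (at z within ball z0 r)" if "z \<in> {z0}" for z
        using that lim z0(3) atw by simp
      show "hh holomorphic_on ball z0 r - {z0}" by (rule holomorphic_transform[OF hd]) (simp add: eq)
    qed simp_all
    then show ?thesis using r by blast
  qed
  obtain r1 where r1: "r1 > 0" "ball (1::complex) r1 \<subseteq> -{0}" "hh holomorphic_on ball 1 r1"
  proof -
    have D1: "D 1 = 0" unfolding D_def DD_def by (simp add: theta_one[OF p1])
    have h1: "hh 1 = L1" unfolding hh_def using D1 by (simp add: theta_one[OF p1])
    have "\<exists>r>0. ball (1::complex) r \<subseteq> -{0::complex} \<and> hh holomorphic_on ball 1 r" by (rule loc[of 1 L1, OF _ D1 h1 L1]) simp
    then obtain r where "r > 0" "ball (1::complex) r \<subseteq> -{0}" "hh holomorphic_on ball 1 r" by blast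
    from this show ?thesis by (rule that)
  qed
  obtain r2 where r2: "r2 > 0" "ball (b*c/d^2) r2 \<subseteq> -{0}" "hh holomorphic_on ball (b*c/d^2) r2"
  proof -
    have a: "(b*c/d^2)*(d^2/(b*c)) = 1" using b0 c0 d0 by (simp add: field_simps)
    have D2: "D (b*c/d^2) = 0" unfolding D_def DD_def a by (simp add: theta_one[OF p1])
    have h2: "hh (b*c/d^2) = L2" unfolding hh_def using D2 thm'_nz[OF ctx] by simp
    have nz: "b*c/d^2 \<noteq> 0" using b0 c0 d0 by simp
    have "\<exists>r>0. ball (b*c/d^2) r \<subseteq> -{0::complex} \<and> hh holomorphic_on ball (b*c/d^2) r" by (rule loc[of "b*c/d^2" L2, OF nz D2 h2 L2])
    then obtain r where "r > 0" "ball (b*c/d^2) r \<subseteq> -{0}" "hh holomorphic_on ball (b*c/d^2) r" by blast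
    from this show ?thesis by (rule that)
  qed
  \<comment> \<open>transport along the periodicity\<close>
  have transp: "\<exists>e>0. hh holomorphic_on ball z e"
    if "z \<noteq> 0" "w0 \<noteq> 0" "r > 0" "ball w0 r \<subseteq> -{0}" "hh holomorphic_on ball w0 r" "p powi k * z = w0" for z w0 r k
  proof -
    define cc where "cc = p powi k"
    have cc0: "cc \<noteq> 0" unfolding cc_def using p0 by simp
    define e where "e = r / norm cc"
    have e0: "e > 0" unfolding e_def using cc0 that(3) by simp
    have img: "(\<lambda>x. cc * x) ` ball z e \<subseteq> ball w0 r"
    proof
      fix y assume "y \<in> (\<lambda>x. cc * x) ` ball z e"
      then obtain x where x: "x \<in> ball z e" "y = cc * x" by auto
      have "w0 - y = cc * (z - x)" using that(6) x(2) unfolding cc_def by (simp add: algebra_simps)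
      then have "dist w0 y = norm cc * dist z x" by (simp add: dist_norm norm_mult)
      also have "\<dots> < norm cc * e" using x(1) cc0 by simp
      also have "\<dots> = r" unfolding e_def using cc0 by simp
      finally show "y \<in> ball w0 r" by simp
    qed
    have "(hh \<circ> (\<lambda>x. cc * x)) holomorphic_on ball z e"
      by (rule holomorphic_on_compose_gen[OF _ that(5) img]) (intro holomorphic_intros)
    moreover have "(hh \<circ> (\<lambda>x. cc * x)) x = hh x" if "x \<in> ball z e" for x
    proof -
      have "cc * x \<in> ball w0 r" by (rule subsetD[OF img]) (rule imageI[OF that])
      then have "cc * x \<noteq> 0" using \<open>ball w0 r \<subseteq> -{0}\<close> by auto
      then have "x \<noteq> 0" by auto
      then show ?thesis unfolding cc_def by (simp add: peri)
    qed
    ultimately have "hh holomorphic_on ball z e" by (rule holomorphic_transform)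
    then show ?thesis using e0 by blast
  qed
  have anal: "hh analytic_on -{0}"
    unfolding analytic_on_def
  proof
    fix z :: complex assume "z \<in> -{0}"
    then have z0: "z \<noteq> 0" by simp
    show "\<exists>e>0. hh holomorphic_on ball z e"
    proof (cases "D z = 0")
      case False
      have "continuous_on (-{0}) D" using Dh by (rule holomorphic_on_imp_continuous_on)
      then have "isCont D z" using z0 opn continuous_on_eq_continuous_at by blast
      then obtain e where e: "e > 0" "\<And>y. dist z y < e \<Longrightarrow> D y \<noteq> 0"
        using continuous_at_avoid[of z D 0] False by auto
      define e' where "e' = min e (norm z)"
      have e': "e' > 0" unfolding e'_def using e z0 by simp
      have sub: "ball z e' \<subseteq> -{0}"
      proof
        fix y assume "y \<in> ball z e'"
        then have "dist z y < norm z" unfolding e'_def by simp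
        then show "y \<in> -{0}" by (auto simp: dist_norm)
      qed
      have "(\<lambda>y. f y / D y) holomorphic_on ball z e'"
        by (rule holomorphic_on_divide[OF holomorphic_on_subset[OF fh sub] holomorphic_on_subset[OF Dh sub]])
           (use e(2) in \<open>auto simp: e'_def\<close>)
      moreover have "f y / D y = hh y" if "y \<in> ball z e'" for y
        using e(2)[of y] that unfolding hh_def e'_def by auto
      ultimately have "hh holomorphic_on ball z e'" by (rule holomorphic_transform)
      then show ?thesis using e' by blast
    next
      case True
      show ?thesis
      proof (cases "theta z p = 0")
        case True
        then obtain k where k: "z = p powi k" using theta_zero[OF p1 z0] by blast
        have "p powi (-k) * z = 1" unfolding k using p0 by (simp add: power_int_minus)
        then show ?thesis using transp[OF z0 _ r1(1) r1(2) r1(3)] by simp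
      next
        case False
        then have "theta (z*m) p = 0" using True unfolding D_def DD_def m_def by simp
        moreover have "z*m \<noteq> 0" using z0 m0 by simp
        ultimately obtain k where k: "z*m = p powi k" using theta_zero[OF p1] by blast
        have "p powi (-k) * z = b*c/d^2"
        proof -
          have "p powi (-k) * z = z / p powi k" using p0 by (simp add: power_int_minus field_simps)
          also have "\<dots> = z / (z*m)" using k by simp
          also have "\<dots> = b*c/d^2" unfolding m_def using z0 b0 c0 d0 by (simp add: field_simps)
          finally show ?thesis .
        qed
        moreover have "b*c/d^2 \<noteq> 0" using b0 c0 d0 by simp
        ultimately show ?thesis using transp[OF z0 _ r2(1) r2(2) r2(3)] by simp
      qed
    qed
  qed
  have hol: "hh holomorphic_on -{0}" using anal by (rule analytic_imp_holomorphic)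
  define A where "A = {y::complex. norm p \<le> norm y \<and> norm y \<le> 1}"
  have np: "0 < norm p" using p0 by simp
  have A0: "A \<subseteq> -{0}" unfolding A_def using np by auto
  have cA: "compact A"
  proof -
    have "closed A" unfolding A_def by (intro closed_Collect_conj closed_Collect_le continuous_intros)
    moreover have "bounded A" unfolding A_def bounded_iff by auto
    ultimately show ?thesis by (simp add: compact_eq_bounded_closed)
  qed
  have "continuous_on A hh"
    using holomorphic_on_imp_continuous_on[OF hol] A0 continuous_on_subset by blast
  then have "bounded (hh ` A)" using cA by (simp add: compact_continuous_image compact_imp_bounded)
  then obtain B where B: "\<And>y. y \<in> A \<Longrightarrow> norm (hh y) \<le> B" unfolding bounded_iff by auto
  have Ball: "norm (hh y) \<le> B" if y0: "y \<noteq> 0" for y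
  proof -
    obtain k where "norm p \<le> norm (p powi k * y) \<and> norm (p powi k * y) \<le> 1"
      using annulus_k[OF np p1 y0] by blast
    then have "p powi k * y \<in> A" unfolding A_def by simp
    then show ?thesis using B peri[OF y0] by metis
  qed
  have gh: "(hh \<circ> exp) holomorphic_on UNIV"
    by (rule holomorphic_on_compose_gen[OF _ hol]) (auto intro!: holomorphic_intros)
  have gb: "bounded (range (hh \<circ> exp))" unfolding bounded_iff
  proof (intro exI[of _ B] ballI)
    fix z assume "z \<in> range (hh \<circ> exp)"
    then obtain w where "z = hh (exp w)" by auto
    then show "norm z \<le> B" using Ball[of "exp w"] by simp
  qed
  obtain cst where cst: "\<And>w. (hh \<circ> exp) w = cst"
    using Liouville_theorem[OF gh gb] unfolding constant_on_def by auto
  have hhc: "hh y = cst" if "y \<noteq> 0" for y using cst[of "Ln y"] that by simp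
  have "hh (b/d) = 0" unfolding hh_def using Dbd fb[OF ctx] unfolding f_def D_def by simp
  then have "hh x = 0" using hhc[OF x0] hhc[of "b/d"] b0 d0 by simp
  then show ?thesis using Dx unfolding hh_def f_def D_def by simp
qed

end

lemma dense_zero:
  fixes F :: "complex \<Rightarrow> complex"
  assumes cont: "continuous_on (-{0}) F" and cnt: "countable C"
    and z: "\<And>z. z \<noteq> 0 \<Longrightarrow> z \<notin> C \<Longrightarrow> F z = 0" and z0: "z \<noteq> 0"
  shows "F z = 0"
proof (rule ccontr)
  assume Fz: "F z \<noteq> 0"
  have opn: "open (-{0::complex})" by (simp add: open_Compl)
  have "isCont F z" using cont opn z0 continuous_on_eq_continuous_at by blast
  then obtain e where e: "e > 0" "\<And>y. dist z y < e \<Longrightarrow> F y \<noteq> 0"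
    using continuous_at_avoid[of z F 0] Fz by auto
  define e' where "e' = min e (norm z)"
  have e': "e' > 0" unfolding e'_def using e z0 by simp
  have "uncountable (ball z e')" by (rule uncountable_ball[OF e'])
  then have "\<not> ball z e' \<subseteq> C" using cnt countable_subset by blast
  then obtain y where y: "y \<in> ball z e'" "y \<notin> C" by blast
  have "dist z y < norm z" using y(1) unfolding e'_def by simp
  then have "y \<noteq> 0" by (auto simp: dist_norm)
  then have "F y = 0" using z y(2) by blast
  moreover have "F y \<noteq> 0" using e(2) y(1) unfolding e'_def by simp
  ultimately show False by simp
qed

lemma countable_powi: "countable (range (\<lambda>k::int. f k))"
  by simp

lemma ff_cont_b: fixes p a c d :: complex assumes "norm p < 1" "a \<noteq> 0" "c \<noteq> 0" "d \<noteq> 0"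
  shows "continuous_on (-{0}) (\<lambda>b. ff p b c d a)"
proof -
  have "(\<lambda>b. ff p b c d a) holomorphic_on (-{0})" unfolding ff_def using assms
    by (intro holomorphic_intros) auto
  then show ?thesis by (rule holomorphic_on_imp_continuous_on)
qed

lemma ff_cont_c: fixes p a b d :: complex assumes "norm p < 1" "a \<noteq> 0" "b \<noteq> 0" "d \<noteq> 0"
  shows "continuous_on (-{0}) (\<lambda>c. ff p b c d a)"
proof -
  have "(\<lambda>c. ff p b c d a) holomorphic_on (-{0})" unfolding ff_def using assms
    by (intro holomorphic_intros) auto
  then show ?thesis by (rule holomorphic_on_imp_continuous_on)
qed

lemma ff_zero_p:
  fixes p a b c d :: complex
  assumes p1: "norm p < 1" and p0: "p \<noteq> 0" and a0: "a \<noteq> 0" and b0: "b \<noteq> 0" and c0: "c \<noteq> 0" and d0: "d \<noteq> 0"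
  shows "ff p b c d a = 0"
proof -
  have A: "ff p b c d a = 0" if gen: "\<And>k. d^2/(b*c) \<noteq> p powi k" "\<And>k. b/d \<noteq> p powi k" "\<And>k. d/c \<noteq> p powi k"
    and nz: "a \<noteq> 0" "b \<noteq> 0" "c \<noteq> 0" for a b c
  proof (rule dense_zero[where F="ff p b c d" and z=a and C="range (\<lambda>k::int. p powi k) \<union> range (\<lambda>k::int. p powi k / (d^2/(b*c)))"])
    show "continuous_on (-{0}) (ff p b c d)"
      by (rule holomorphic_on_imp_continuous_on[OF f_hol[OF p1 p0 nz(2,3) d0 gen]])
    show "countable (range (\<lambda>k::int. p powi k) \<union> range (\<lambda>k::int. p powi k / (d^2/(b*c))))" by simp
    fix x assume x: "x \<noteq> 0" "x \<notin> range (\<lambda>k::int. p powi k) \<union> range (\<lambda>k::int. p powi k / (d^2/(b*c)))"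
    have m0: "d^2/(b*c) \<noteq> 0" using nz d0 by simp
    have "theta x p \<noteq> 0"
      using theta_zero[OF p1 x(1)] x(2) by auto
    moreover have "theta (x*(d^2/(b*c))) p \<noteq> 0"
    proof
      assume "theta (x*(d^2/(b*c))) p = 0"
      then obtain k where "x*(d^2/(b*c)) = p powi k" using theta_zero[OF p1] x(1) m0 by fastforce
      then have "x = p powi k / (d^2/(b*c))" using m0 by (simp add: field_simps)
      then show False using x(2) by auto
    qed
    ultimately have "DD p b c d x \<noteq> 0" unfolding DD_def by simp
    then show "ff p b c d x = 0" by (rule generic_zero[OF p1 p0 nz(2,3) d0 gen x(1)])
  qed (rule nz(1))
  have B: "ff p b c d a = 0" if G3: "\<And>k. d/c \<noteq> p powi k" and nz: "a \<noteq> 0" "b \<noteq> 0" "c \<noteq> 0" for a b c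
  proof (rule dense_zero[where F="\<lambda>b. ff p b c d a" and z=b and C="range (\<lambda>k::int. d * p powi k) \<union> range (\<lambda>k::int. d^2/(c * p powi k))"])
    show "continuous_on (-{0}) (\<lambda>b. ff p b c d a)" by (rule ff_cont_b[OF p1 nz(1,3) d0])
    show "countable (range (\<lambda>k::int. d * p powi k) \<union> range (\<lambda>k::int. d^2/(c * p powi k)))" by simp
    fix x assume x: "x \<noteq> 0" "x \<notin> range (\<lambda>k::int. d * p powi k) \<union> range (\<lambda>k::int. d^2/(c * p powi k))"
    show "ff p x c d a = 0"
    proof (rule A[OF _ _ G3 nz(1) x(1) nz(3)])
      fix k :: int
      have pk: "p powi k \<noteq> 0" using p0 by simp
      show "d^2/(x*c) \<noteq> p powi k"
      proof
        assume "d^2/(x*c) = p powi k"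
        then have "x = d^2/(c * p powi k)" using x(1) nz(3) pk by (simp add: field_simps)
        then show False using x(2) by auto
      qed
      show "x/d \<noteq> p powi k"
      proof
        assume "x/d = p powi k"
        then have "x = d * p powi k" using d0 by (simp add: field_simps)
        then show False using x(2) by auto
      qed
    qed
  qed (rule nz(2))
  show ?thesis
  proof (rule dense_zero[where F="\<lambda>c. ff p b c d a" and z=c and C="range (\<lambda>k::int. d / p powi k)"])
    show "continuous_on (-{0}) (\<lambda>c. ff p b c d a)" by (rule ff_cont_c[OF p1 a0 b0 d0])
    show "countable (range (\<lambda>k::int. d / p powi k))" by simp
    fix x assume x: "x \<noteq> 0" "x \<notin> range (\<lambda>k::int. d / p powi k)"
    show "ff p b x d a = 0"
    proof (rule B[OF _ a0 b0 x(1)])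
      fix k :: int
      have pk: "p powi k \<noteq> 0" using p0 by simp
      show "d/x \<noteq> p powi k"
      proof
        assume "d/x = p powi k"
        then have "x = d / p powi k" using x(1) pk by (simp add: field_simps)
        then show False using x(2) by auto
      qed
    qed
  qed (rule c0)
qed

lemma qpinf_0: "qpinf x 0 = 1 - x"
proof -
  have "qpinf x 0 = (\<Prod>n\<in>{0}. 1 - x * 0^n)" unfolding qpinf_def
    by (rule prodinf_finite) auto
  then show ?thesis by simp
qed

lemma theta_0: "theta x 0 = 1 - x"
  unfolding theta_def qpinf_0 by simp

lemma ff_zero:
  fixes p a b c d :: complex
  assumes p1: "norm p < 1" and a0: "a \<noteq> 0" and b0: "b \<noteq> 0" and c0: "c \<noteq> 0" and d0: "d \<noteq> 0"
  shows "ff p b c d a = 0"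
proof (cases "p = 0")
  case True
  show ?thesis unfolding True ff_def theta_0 using b0 c0 d0
    by (simp add: field_simps power2_eq_square)
next
  case False
  show ?thesis by (rule ff_zero_p[OF p1 False a0 b0 c0 d0])
qed

theorem theta_add:
  fixes p a b c d :: complex
  assumes "norm p < 1" "a \<noteq> 0" "b \<noteq> 0" "c \<noteq> 0" "d \<noteq> 0"
  shows "theta a p * theta b p * theta c p * theta (a*d^2/(b*c)) p
       - theta d p * theta (a*d/b) p * theta (a*d/c) p * theta (b*c/d) p
       = d * theta (a*d) p * theta (b/d) p * theta (c/d) p * theta (a*d/(b*c)) p"
  using ff_zero[OF assms] unfolding ff_def by (simp add: algebra_simps)

lemma epoch_0 [simp]: "epoch x Q p 0 = 1" unfolding epoch_def by simp

lemma epoch_Suc: "epoch x Q p (Suc k) = epoch x Q p k * theta (x*Q^k) p"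
  unfolding epoch_def by simp

lemma epoch_Suc': assumes "y = x*Q" shows "epoch x Q p (Suc k) = theta x p * epoch y Q p k"
  unfolding epoch_def assms prod.lessThan_Suc_shift by (simp add: mult.assoc)

lemma epoch_nz: assumes "epoch x Q p n \<noteq> 0" "k \<le> n" shows "epoch x Q p k \<noteq> 0"
  using assms unfolding epoch_def by (auto simp: prod_zero_iff)

lemma theta_rev: fixes y p :: complex assumes "norm p < 1" "y \<noteq> 0" shows "theta y p = - y * theta (1/y) p"
  using theta_inv[OF assms] assms(2) by simp

lemma epoch_rev:
  fixes x Q p y :: complex
  assumes p: "norm p < 1" and x0: "x \<noteq> 0" and Q0: "Q \<noteq> 0" and y: "y * Q^n * x = Q" and kn: "k \<le> n"
  shows "epoch x Q p n = epoch x Q p (n-k) * (\<Prod>i<k. - x*Q^(n-1-i)) * epoch y Q p k"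
  using kn
proof (induction k)
  case 0 then show ?case by simp
next
  case (Suc k)
  have kn: "k < n" using Suc.prems by simp
  have IH: "epoch x Q p n = epoch x Q p (n-k) * (\<Prod>i<k. - x*Q^(n-1-i)) * epoch y Q p k"
    using Suc.IH kn by simp
  have nk: "n - k = Suc (n - Suc k)" using kn by simp
  have e1: "epoch x Q p (n-k) = epoch x Q p (n - Suc k) * theta (x*Q^(n-1-k)) p"
    unfolding nk epoch_Suc by simp
  have z0: "x*Q^(n-1-k) \<noteq> 0" using x0 Q0 by simp
  have arg: "1/(x*Q^(n-1-k)) = y*Q^k"
  proof -
    have nn: "n = (n-1-k) + k + 1" using kn by simp
    have "Q^n = Q^((n-1-k) + k + 1)" by (subst nn) (rule refl)
    also have "\<dots> = Q^(n-1-k) * Q^k * Q" by (simp only: power_add power_one_right)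
    finally have "Q^n = Q^(n-1-k) * Q^k * Q" .
    then have "y * Q^(n-1-k) * Q^k * Q * x = Q" using y by (simp add: mult_ac)
    then have "y * Q^k * (x*Q^(n-1-k)) = 1" using Q0 by (simp add: mult_ac)
    then show ?thesis using z0 by (simp add: field_simps)
  qed
  have e2: "theta (x*Q^(n-1-k)) p = - (x*Q^(n-1-k)) * theta (y*Q^k) p"
    using theta_rev[OF p z0] unfolding arg .
  show ?case unfolding IH e1 e2 epoch_Suc prod.lessThan_Suc by (simp add: mult_ac)
qed


lemma prod4_eq:
  fixes x1 x2 x3 x4 Q1 Q2 Q3 Q4 y1 y2 y3 y4 R1 R2 R3 R4 :: complex
  assumes "x1 * x2 * x3 * x4 = y1 * y2 * y3 * y4" "Q1 * Q2 * Q3 * Q4 = R1 * R2 * R3 * R4"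
  shows "(\<Prod>i<k. - x1 * Q1^(n-1-i)) * (\<Prod>i<k. - x2 * Q2^(n-1-i)) * (\<Prod>i<k. - x3 * Q3^(n-1-i)) * (\<Prod>i<k. - x4 * Q4^(n-1-i))
       = (\<Prod>i<k. - y1 * R1^(n-1-i)) * (\<Prod>i<k. - y2 * R2^(n-1-i)) * (\<Prod>i<k. - y3 * R3^(n-1-i)) * (\<Prod>i<k. - y4 * R4^(n-1-i))"
proof -
  have g: "(\<Prod>i<k. - x1 * Q1^(n-1-i)) * (\<Prod>i<k. - x2 * Q2^(n-1-i)) * (\<Prod>i<k. - x3 * Q3^(n-1-i)) * (\<Prod>i<k. - x4 * Q4^(n-1-i))
     = (\<Prod>i<k. (x1 * x2 * x3 * x4) * (Q1 * Q2 * Q3 * Q4)^(n-1-i))" for x1 x2 x3 x4 Q1 Q2 Q3 Q4 :: complex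
    by (simp add: prod.distrib[symmetric] power_mult_distrib mult_ac)
  show ?thesis unfolding g assms ..
qed

lemma conv_sym:
  fixes x y :: "nat \<Rightarrow> complex"
  shows "(\<Sum>k\<le>n. x k * (\<Sum>j\<le>n-k. y j)) = (\<Sum>k\<le>n. y k * (\<Sum>j\<le>n-k. x j))"
proof -
  have tri: "(\<Sum>k\<le>n. x k * (\<Sum>j\<le>n-k. y j)) = (\<Sum>(i,j)\<in>{(i,j). i + j \<le> n}. x i * y j)"
    for x y :: "nat \<Rightarrow> complex"
  proof -
    have "(\<Sum>k\<le>n. x k * (\<Sum>j\<le>n-k. y j)) = (\<Sum>k\<le>n. \<Sum>j\<le>n-k. x k * y j)"
      by (simp add: sum_distrib_left)
    also have "\<dots> = (\<Sum>(i,j)\<in>Sigma {..n} (\<lambda>k. {..n-k}). x i * y j)"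
      by (rule sum.Sigma) auto
    also have "Sigma {..n} (\<lambda>k. {..n-k}) = {(i,j). i + j \<le> n}" by auto
    finally show ?thesis .
  qed
  have "(\<Sum>(i,j)\<in>{(i,j). i + j \<le> n}. x i * y j) = (\<Sum>(i,j)\<in>{(i,j). i + j \<le> n}. y i * x j)"
    by (rule sum.reindex_bij_witness[where i=prod.swap and j=prod.swap]) auto
  then show ?thesis unfolding tri .
qed

definition NP :: "complex \<Rightarrow> complex \<Rightarrow> complex \<Rightarrow> complex \<Rightarrow> complex \<Rightarrow> complex \<Rightarrow> complex \<Rightarrow> complex \<Rightarrow> complex \<Rightarrow> nat \<Rightarrow> complex" where
  "NP a b c d q r s t p k = epoch (a * r * s * t/q^2) (r * s * t/q^2) p k  *  epoch (b * r) r p k  *  epoch (c * s) s p k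
         *  epoch (a * d^2 * t/(b * c)) t p k"
definition DP :: "complex \<Rightarrow> complex \<Rightarrow> complex \<Rightarrow> complex \<Rightarrow> complex \<Rightarrow> complex \<Rightarrow> complex \<Rightarrow> complex \<Rightarrow> complex \<Rightarrow> nat \<Rightarrow> complex" where
  "DP a b c d q r s t p k = epoch (d * q) q p k  *  epoch (a * d * s * t/(b * q)) (s * t/q) p k  *  epoch (a * d * r * t/(c * q)) (r * t/q) p k
         *  epoch (b * c * r * s/(d * q)) (r * s/q) p k"
definition Th0 :: "complex \<Rightarrow> complex \<Rightarrow> complex \<Rightarrow> complex \<Rightarrow> complex \<Rightarrow> complex" where
  "Th0 a b c d p = theta (a * d) p  *  theta (b/d) p  *  theta (c/d) p  *  theta (a * d/(b * c)) p"
definition cc1 :: "complex \<Rightarrow> complex \<Rightarrow> complex \<Rightarrow> complex \<Rightarrow> complex \<Rightarrow> complex" where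
  "cc1 a b c d p = (theta a p  *  theta b p  *  theta c p  *  theta (a * d^2/(b * c)) p)
       / (d  *  (theta (a * d) p  *  theta (b/d) p  *  theta (c/d) p  *  theta (a * d/(b * c)) p))"
definition cc2 :: "complex \<Rightarrow> complex \<Rightarrow> complex \<Rightarrow> complex \<Rightarrow> complex \<Rightarrow> complex" where
  "cc2 a b c d p = (theta d p  *  theta (a * d/b) p  *  theta (a * d/c) p  *  theta (b * c/d) p)
       / (d  *  (theta (a * d) p  *  theta (b/d) p  *  theta (c/d) p  *  theta (a * d/(b * c)) p))"

lemma Phi_eq: "Phi a b c d q r s t p k = NP a b c d q r s t p k / DP a b c d q r s t p k"
  unfolding Phi_def NP_def DP_def ..

context
  fixes a b c d q r s t p :: complex and n :: nat
  assumes wd: "well_defined a b c d q r s t p n"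
begin

lemma p1: "norm p < 1" using wd unfolding well_defined_def by simp
lemma nz: "a \<noteq> 0" "b \<noteq> 0" "c \<noteq> 0" "d \<noteq> 0" "q \<noteq> 0" "r \<noteq> 0" "s \<noteq> 0" "t \<noteq> 0"
  using wd unfolding well_defined_def by simp_all
lemma Th0_nz: "Th0 a b c d p \<noteq> 0" using wd unfolding well_defined_def Th0_def by simp
lemma DP_nz: assumes "k \<le> n" shows "DP a b c d q r s t p k \<noteq> 0"
  unfolding DP_def by (intro no_zero_divisors epoch_nz[OF _ assms]) (use wd in \<open>simp_all add: well_defined_def\<close>)
lemma NP_nz: assumes "k \<le> n" shows "NP a b c d q r s t p k \<noteq> 0"
  unfolding NP_def by (intro no_zero_divisors epoch_nz[OF _ assms]) (use wd in \<open>simp_all add: well_defined_def\<close>)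

lemma c12: "cc1 a b c d p - cc2 a b c d p = 1"
proof -
  have "theta a p * theta b p * theta c p * theta (a*d^2/(b*c)) p
       - theta d p * theta (a*d/b) p * theta (a*d/c) p * theta (b*c/d) p
       = d * theta (a*d) p * theta (b/d) p * theta (c/d) p * theta (a*d/(b*c)) p"
    by (rule theta_add[OF p1 nz(1-4)])
  then show ?thesis using Th0_nz nz unfolding cc1_def cc2_def Th0_def by (simp add: field_simps)
qed

lemma lam_step: assumes jn: "Suc j \<le> n"
  shows "lam a b c d q r s t p (Suc j) = cc1 a b c d p * (Phi a b c d q r s t p (Suc j) - Phi a b c d q r s t p j)"
proof -
  note nz = nz
  define A where "A = a * r * s * t/q^2 * (r * s * t/q^2)^j"
  define B where "B = b * r * r^j"
  define C where "C = c * s * s^j"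
  define Dd where "Dd = d * q * q^j"
  have A0: "A \<noteq> 0" "B \<noteq> 0" "C \<noteq> 0" "Dd \<noteq> 0" unfolding A_def B_def C_def Dd_def using nz by simp_all
  have add: "theta A p * theta B p * theta C p * theta (A * Dd^2/(B * C)) p
       - theta Dd p * theta (A * Dd/B) p * theta (A * Dd/C) p * theta (B * C/Dd) p
       = Dd * theta (A * Dd) p * theta (B/Dd) p * theta (C/Dd) p * theta (A * Dd/(B * C)) p"
    by (rule theta_add[OF p1 A0])
  have i1: "A * Dd^2/(B * C) = a * d^2 * t/(b * c) * t^j"
    unfolding A_def B_def C_def Dd_def using nz by (simp add: field_simps power_mult_distrib power_divide power2_eq_square)
  have i2: "A * Dd/B = a * d * s * t/(b * q) * (s * t/q)^j"
    unfolding A_def B_def C_def Dd_def using nz by (simp add: field_simps power_mult_distrib power_divide power2_eq_square)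
  have i3: "A * Dd/C = a * d * r * t/(c * q) * (r * t/q)^j"
    unfolding A_def B_def C_def Dd_def using nz by (simp add: field_simps power_mult_distrib power_divide power2_eq_square)
  have i4: "B * C/Dd = b * c * r * s/(d * q) * (r * s/q)^j"
    unfolding A_def B_def C_def Dd_def using nz by (simp add: field_simps power_mult_distrib power_divide power2_eq_square)
  have i5: "A * Dd = a * d * (r * s * t/q)^(Suc j)"
    unfolding A_def B_def C_def Dd_def using nz by (simp add: field_simps power_mult_distrib power_divide power2_eq_square)
  have i6: "B/Dd = b * r^(Suc j)/(d * q^(Suc j))"
    unfolding A_def B_def C_def Dd_def using nz by (simp add: field_simps power_mult_distrib power_divide power2_eq_square)
  have i7: "C/Dd = c * s^(Suc j)/(d * q^(Suc j))"
    unfolding A_def B_def C_def Dd_def using nz by (simp add: field_simps power_mult_distrib power_divide power2_eq_square)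
  have i8: "A * Dd/(B * C) = a * d * t^(Suc j)/(b * c * q^(Suc j))"
    unfolding A_def B_def C_def Dd_def using nz by (simp add: field_simps power_mult_distrib power_divide power2_eq_square)
  have iA: "A = a * r * s * t/q^2 * (r * s * t/q^2)^j" "B = b * r * r^j" "C = c * s * s^j" "Dd = d * q * q^j"
    unfolding A_def B_def C_def Dd_def by simp_all
  define TT where "TT = theta (a * d * (r * s * t/q)^(Suc j)) p  *  theta (b * r^(Suc j)/(d * q^(Suc j))) p
     *  theta (c * s^(Suc j)/(d * q^(Suc j))) p *  theta (a * d * t^(Suc j)/(b * c * q^(Suc j))) p"
  define thn where "thn = theta (a * r * s * t/q^2 * (r * s * t/q^2)^j) p * theta (b * r * r^j) p * theta (c * s * s^j) p
     * theta (a * d^2 * t/(b * c) * t^j) p"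
  define thd where "thd = theta (d * q * q^j) p * theta (a * d * s * t/(b * q) * (s * t/q)^j) p * theta (a * d * r * t/(c * q) * (r * t/q)^j) p
     * theta (b * c * r * s/(d * q) * (r * s/q)^j) p"
  have key: "thn - thd = d * q * q^j * TT"
  proof -
    note add1 = add[unfolded i1 i2 i3 i4 i8]
    note add2 = add1[unfolded i5 i6 i7]
    note add3 = add2[unfolded A_def B_def C_def Dd_def]
    show ?thesis unfolding thn_def thd_def TT_def using add3 by (simp only: mult.assoc)
  qed
  have NPs: "NP a b c d q r s t p (Suc j) = NP a b c d q r s t p j * thn"
    unfolding NP_def thn_def epoch_Suc by (simp add: mult_ac)
  have DPs: "DP a b c d q r s t p (Suc j) = DP a b c d q r s t p j * thd"
    unfolding DP_def thd_def epoch_Suc by (simp add: mult_ac)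
  have Nl: "epoch a (r * s * t/q^2) p (Suc j)  *  epoch b r p (Suc j)  *  epoch c s p (Suc j)  *  epoch (a * d^2/(b * c)) t p (Suc j)
     = theta a p * theta b p * theta c p * theta (a * d^2/(b * c)) p * NP a b c d q r s t p j"
  proof -
    have "epoch a (r * s * t/q^2) p (Suc j) = theta a p * epoch (a * r * s * t/q^2) (r * s * t/q^2) p j"
      by (rule epoch_Suc') simp
    moreover have "epoch b r p (Suc j) = theta b p * epoch (b * r) r p j" by (rule epoch_Suc') simp
    moreover have "epoch c s p (Suc j) = theta c p * epoch (c * s) s p j" by (rule epoch_Suc') simp
    moreover have "epoch (a * d^2/(b * c)) t p (Suc j) = theta (a * d^2/(b * c)) p * epoch (a * d^2 * t/(b * c)) t p j"
      by (rule epoch_Suc') simp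
    ultimately show ?thesis unfolding NP_def by (simp add: mult_ac)
  qed
  have Dj: "DP a b c d q r s t p j \<noteq> 0" using DP_nz jn by simp
  have DSj: "DP a b c d q r s t p (Suc j) \<noteq> 0" using DP_nz jn by simp
  then have thd0: "thd \<noteq> 0" unfolding DPs by simp
  have T0: "Th0 a b c d p \<noteq> 0" by (rule Th0_nz)
  have lamS: "lam a b c d q r s t p (Suc j) = TT / Th0 a b c d p
     * (theta a p * theta b p * theta c p * theta (a * d^2/(b * c)) p * NP a b c d q r s t p j)
       / (DP a b c d q r s t p j * thd) * q^(Suc j)"
    unfolding lam_def TT_def Th0_def Nl DPs[symmetric] unfolding DP_def by simp
  have thn_eq: "thn = thd + d * q * q^j * TT" using key by (simp add: algebra_simps)
  show ?thesis unfolding lamS Phi_eq NPs DPs cc1_def thn_eq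
    using Dj thd0 T0 nz(4) unfolding Th0_def by (simp add: field_simps)
qed

lemma lam0: "lam a b c d q r s t p 0 = 1"
  using Th0_nz unfolding lam_def Th0_def by simp


lemma lam_sum: "m \<le> n \<Longrightarrow> (\<Sum>i\<le>m. lam a b c d q r s t p i) = cc1 a b c d p * Phi a b c d q r s t p m - cc2 a b c d p"
proof (induction m)
  case 0
  have "Phi a b c d q r s t p 0 = 1" unfolding Phi_def by simp
  then show ?case using lam0 c12 by simp
next
  case (Suc m)
  then have IH: "(\<Sum>i\<le>m. lam a b c d q r s t p i) = cc1 a b c d p * Phi a b c d q r s t p m - cc2 a b c d p" by simp
  have e1: "(\<Sum>i\<le>Suc m. lam a b c d q r s t p i) = (\<Sum>i\<le>m. lam a b c d q r s t p i) + lam a b c d q r s t p (Suc m)"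
    by simp
  show ?case unfolding e1 IH lam_step[OF Suc.prems] by (simp add: algebra_simps)
qed

lemma G_eq: assumes kn: "k \<le> n"
  shows "G a b c d q r s t p n k = (cc1 a b c d p * Phi a b c d q r s t p (n-k) - cc2 a b c d p) / Phi a b c d q r s t p n"
proof -
  note nz = nz
  have Geq: "G a b c d q r s t p n k = cc1 a b c d p *
        ((epoch (1/(q^n * d)) q p k  *  epoch (b * (q/(s * t))^n/(a * d)) (s * t/q) p k)
        / (epoch ((q^2/(r * s * t))^n/a) (r * s * t/q^2) p k  *  epoch (1/(r^n * b)) r p k))
      *  ((epoch (c * (q/(r * t))^n/(a * d)) (r * t/q) p k  *  epoch (d * (q/(r * s))^n/(b * c)) (r * s/q) p k)
        / (epoch (1/(s^n * c)) s p k  *  epoch (b * c/(t^n * a * d^2)) t p k))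
     - cc2 a b c d p * (1 / Phi a b c d q r s t p n)"
    unfolding G_def cc1_def cc2_def ..
  have r1: "epoch (a * r * s * t/q^2) (r * s * t/q^2) p n = epoch (a * r * s * t/q^2) (r * s * t/q^2) p (n-k)
      * (\<Prod>i<k. - (a * r * s * t/q^2) * (r * s * t/q^2)^(n-1-i)) * epoch ((q^2/(r * s * t))^n/a) (r * s * t/q^2) p k"
    by (rule epoch_rev[OF p1 _ _ _ kn]) (use nz in \<open>simp_all add: field_simps power_mult_distrib power_divide\<close>)
  have r2: "epoch (b * r) r p n = epoch (b * r) r p (n-k) * (\<Prod>i<k. - (b * r) * r^(n-1-i)) * epoch (1/(r^n * b)) r p k"
    by (rule epoch_rev[OF p1 _ _ _ kn]) (use nz in \<open>simp_all add: field_simps\<close>)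
  have r3: "epoch (c * s) s p n = epoch (c * s) s p (n-k) * (\<Prod>i<k. - (c * s) * s^(n-1-i)) * epoch (1/(s^n * c)) s p k"
    by (rule epoch_rev[OF p1 _ _ _ kn]) (use nz in \<open>simp_all add: field_simps\<close>)
  have r4: "epoch (a * d^2 * t/(b * c)) t p n = epoch (a * d^2 * t/(b * c)) t p (n-k)
      * (\<Prod>i<k. - (a * d^2 * t/(b * c)) * t^(n-1-i)) * epoch (b * c/(t^n * a * d^2)) t p k"
    by (rule epoch_rev[OF p1 _ _ _ kn]) (use nz in \<open>simp_all add: field_simps\<close>)
  have r5: "epoch (d * q) q p n = epoch (d * q) q p (n-k) * (\<Prod>i<k. - (d * q) * q^(n-1-i)) * epoch (1/(q^n * d)) q p k"
    by (rule epoch_rev[OF p1 _ _ _ kn]) (use nz in \<open>simp_all add: field_simps\<close>)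
  have r6: "epoch (a * d * s * t/(b * q)) (s * t/q) p n = epoch (a * d * s * t/(b * q)) (s * t/q) p (n-k)
      * (\<Prod>i<k. - (a * d * s * t/(b * q)) * (s * t/q)^(n-1-i)) * epoch (b * (q/(s * t))^n/(a * d)) (s * t/q) p k"
    by (rule epoch_rev[OF p1 _ _ _ kn]) (use nz in \<open>simp_all add: field_simps power_mult_distrib power_divide\<close>)
  have r7: "epoch (a * d * r * t/(c * q)) (r * t/q) p n = epoch (a * d * r * t/(c * q)) (r * t/q) p (n-k)
      * (\<Prod>i<k. - (a * d * r * t/(c * q)) * (r * t/q)^(n-1-i)) * epoch (c * (q/(r * t))^n/(a * d)) (r * t/q) p k"
    by (rule epoch_rev[OF p1 _ _ _ kn]) (use nz in \<open>simp_all add: field_simps power_mult_distrib power_divide\<close>)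
  have r8: "epoch (b * c * r * s/(d * q)) (r * s/q) p n = epoch (b * c * r * s/(d * q)) (r * s/q) p (n-k)
      * (\<Prod>i<k. - (b * c * r * s/(d * q)) * (r * s/q)^(n-1-i)) * epoch (d * (q/(r * s))^n/(b * c)) (r * s/q) p k"
    by (rule epoch_rev[OF p1 _ _ _ kn]) (use nz in \<open>simp_all add: field_simps power_mult_distrib power_divide\<close>)
  define PN where "PN = (\<Prod>i<k. - (a * r * s * t/q^2) * (r * s * t/q^2)^(n-1-i)) * (\<Prod>i<k. - (b * r) * r^(n-1-i))
     * (\<Prod>i<k. - (c * s) * s^(n-1-i)) * (\<Prod>i<k. - (a * d^2 * t/(b * c)) * t^(n-1-i))"
  define PD where "PD = (\<Prod>i<k. - (d * q) * q^(n-1-i)) * (\<Prod>i<k. - (a * d * s * t/(b * q)) * (s * t/q)^(n-1-i))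
     * (\<Prod>i<k. - (a * d * r * t/(c * q)) * (r * t/q)^(n-1-i)) * (\<Prod>i<k. - (b * c * r * s/(d * q)) * (r * s/q)^(n-1-i))"
  have PNPD: "PN = PD" unfolding PN_def PD_def
    by (rule prod4_eq) (use nz in \<open>simp_all add: field_simps power2_eq_square\<close>)
  define RN where "RN = epoch ((q^2/(r * s * t))^n/a) (r * s * t/q^2) p k * epoch (1/(r^n * b)) r p k
     * epoch (1/(s^n * c)) s p k * epoch (b * c/(t^n * a * d^2)) t p k"
  define RD where "RD = epoch (1/(q^n * d)) q p k * epoch (b * (q/(s * t))^n/(a * d)) (s * t/q) p k
     * epoch (c * (q/(r * t))^n/(a * d)) (r * t/q) p k * epoch (d * (q/(r * s))^n/(b * c)) (r * s/q) p k"
  have NPn: "NP a b c d q r s t p n = NP a b c d q r s t p (n-k) * PN * RN"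
    unfolding NP_def r1 r2 r3 r4 PN_def RN_def by (simp add: mult_ac)
  have DPn: "DP a b c d q r s t p n = DP a b c d q r s t p (n-k) * PD * RD"
    unfolding DP_def r5 r6 r7 r8 PD_def RD_def by (simp add: mult_ac)
  have N0: "NP a b c d q r s t p n \<noteq> 0" by (rule NP_nz) simp
  have D0: "DP a b c d q r s t p n \<noteq> 0" by (rule DP_nz) simp
  have Nk0: "NP a b c d q r s t p (n-k) \<noteq> 0" by (rule NP_nz) simp
  have Dk0: "DP a b c d q r s t p (n-k) \<noteq> 0" by (rule DP_nz) simp
  have PN0: "PN \<noteq> 0" "RN \<noteq> 0" using N0 unfolding NPn by simp_all
  have RD0: "RD \<noteq> 0" using D0 unfolding DPn by simp
  have RR: "((epoch (1/(q^n * d)) q p k  *  epoch (b * (q/(s * t))^n/(a * d)) (s * t/q) p k)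
        / (epoch ((q^2/(r * s * t))^n/a) (r * s * t/q^2) p k  *  epoch (1/(r^n * b)) r p k))
      *  ((epoch (c * (q/(r * t))^n/(a * d)) (r * t/q) p k  *  epoch (d * (q/(r * s))^n/(b * c)) (r * s/q) p k)
        / (epoch (1/(s^n * c)) s p k  *  epoch (b * c/(t^n * a * d^2)) t p k)) = RD / RN"
    unfolding RD_def RN_def by (simp add: field_simps)
  have "RD / RN = Phi a b c d q r s t p (n-k) / Phi a b c d q r s t p n"
    unfolding Phi_eq NPn DPn PNPD using PN0 RD0 Nk0 Dk0 PNPD by (simp add: field_simps)
  then have RR': "((epoch (1/(q^n * d)) q p k  *  epoch (b * (q/(s * t))^n/(a * d)) (s * t/q) p k)
        / (epoch ((q^2/(r * s * t))^n/a) (r * s * t/q^2) p k  *  epoch (1/(r^n * b)) r p k))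
      *  ((epoch (c * (q/(r * t))^n/(a * d)) (r * t/q) p k  *  epoch (d * (q/(r * s))^n/(b * c)) (r * s/q) p k)
        / (epoch (1/(s^n * c)) s p k  *  epoch (b * c/(t^n * a * d^2)) t p k)) = Phi a b c d q r s t p (n-k) / Phi a b c d q r s t p n"
    using RR by simp
  have Phin0: "Phi a b c d q r s t p n \<noteq> 0" unfolding Phi_eq using N0 D0 by simp
  have G3: "G a b c d q r s t p n k = cc1 a b c d p *
        (((epoch (1/(q^n * d)) q p k  *  epoch (b * (q/(s * t))^n/(a * d)) (s * t/q) p k)
        / (epoch ((q^2/(r * s * t))^n/a) (r * s * t/q^2) p k  *  epoch (1/(r^n * b)) r p k))
      *  ((epoch (c * (q/(r * t))^n/(a * d)) (r * t/q) p k  *  epoch (d * (q/(r * s))^n/(b * c)) (r * s/q) p k)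
        / (epoch (1/(s^n * c)) s p k  *  epoch (b * c/(t^n * a * d^2)) t p k)))
     - cc2 a b c d p * (1 / Phi a b c d q r s t p n)"
    unfolding Geq by (simp only: mult.assoc)
  show ?thesis unfolding G3 RR' using Phin0 by (simp add: field_simps)
qed

end


theorem mainTheorem12:
  fixes a b c d q r s t p A B C D Q R S T P :: complex and n :: nat
  assumes "well_defined a b c d q r s t p n"
    and "well_defined A B C D Q R S T P n"
  shows "(\<Sum>k\<le>n. lam a b c d q r s t p k  *  G A B C D Q R S T P n k)
       = Phi a b c d q r s t p n / Phi A B C D Q R S T P n
          *  (\<Sum>k\<le>n. lam A B C D Q R S T P k  *  G a b c d q r s t p n k)"
proof -
  note w1 = assms(1) and w2 = assms(2)
  define x where "x = lam a b c d q r s t p"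
  define y where "y = lam A B C D Q R S T P"
  have Ph1: "Phi a b c d q r s t p n \<noteq> 0" unfolding Phi_eq using NP_nz[OF w1] DP_nz[OF w1] by simp
  have Ph2: "Phi A B C D Q R S T P n \<noteq> 0" unfolding Phi_eq using NP_nz[OF w2] DP_nz[OF w2] by simp
  have G1: "G a b c d q r s t p n k = (\<Sum>j\<le>n-k. x j) / Phi a b c d q r s t p n" if "k \<le> n" for k
    unfolding x_def using G_eq[OF w1 that] lam_sum[OF w1, of "n-k"] by simp
  have G2: "G A B C D Q R S T P n k = (\<Sum>j\<le>n-k. y j) / Phi A B C D Q R S T P n" if "k \<le> n" for k
    unfolding y_def using G_eq[OF w2 that] lam_sum[OF w2, of "n-k"] by simp
  have L: "(\<Sum>k\<le>n. lam a b c d q r s t p k  *  G A B C D Q R S T P n k)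
      = (\<Sum>k\<le>n. x k * (\<Sum>j\<le>n-k. y j)) / Phi A B C D Q R S T P n"
    unfolding sum_divide_distrib x_def[symmetric] by (rule sum.cong) (simp_all add: G2)
  have Rt: "(\<Sum>k\<le>n. lam A B C D Q R S T P k  *  G a b c d q r s t p n k)
      = (\<Sum>k\<le>n. y k * (\<Sum>j\<le>n-k. x j)) / Phi a b c d q r s t p n"
    unfolding sum_divide_distrib y_def[symmetric] by (rule sum.cong) (simp_all add: G1)
  show ?thesis unfolding L Rt conv_sym[where x=x and y=y and n=n] using Ph1 Ph2 by (simp add: field_simps)
qed

end
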